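(* Let $A\in\mathbb{C}^{p\times p}$ and $C\in\mathbb{C}^{q\times q}$ be Hermitian positive semidefinite, let $B\in\mathbb{C}^{p\times q}$, and let $H=\begin{bmatrix} A & B\\ B^* & -C\end{bmatrix}$. Then $H$ is nonsingular if and only if the matrices $A+\sqrt{BB^*}$ and $C+\sqrt{B^*B}$ are both positive definite.
   Context: $\sqrt{X}$ denotes the positive semidefinite square root of a positive semidefinite matrix $X$. *)

theory Defs
  imports "Jordan_Normal_Form.Schur_Decomposition"
begin

definition hermitian_mat :: "complex mat \<Rightarrow> bool" where
  "hermitian_mat A \<longleftrightarrow> square_mat A \<and> mat_adjoint A = A"

text \<open>Hermitian positive semidefinite: x* A x \<ge> 0 for all x (the quadratic form
  of a Hermitian matrix is real, so we compare its real part).\<close>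
definition psd_mat :: "complex mat \<Rightarrow> bool" where
  "psd_mat A \<longleftrightarrow> hermitian_mat A \<and>
     (\<forall>v \<in> carrier_vec (dim_row A). 0 \<le> Re ((A *\<^sub>v v) \<bullet>c v))"

definition pd_mat :: "complex mat \<Rightarrow> bool" where
  "pd_mat A \<longleftrightarrow> hermitian_mat A \<and>
     (\<forall>v \<in> carrier_vec (dim_row A). v \<noteq> 0\<^sub>v (dim_row A) \<longrightarrow> 0 < Re ((A *\<^sub>v v) \<bullet>c v))"

definition sqrt_mat :: "complex mat \<Rightarrow> complex mat" where
  "sqrt_mat X = (THE S. psd_mat S \<and> S * S = X)"

end

theory Submission
  imports Defs "Jordan_Normal_Form.Spectral_Radius"
begin


lemma adj_dims[simp]: "dim_row (mat_adjoint A) = dim_col A" "dim_col (mat_adjoint A) = dim_row A"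
  unfolding mat_adjoint_def by (auto simp: mat_of_rows_def)

lemma adj_carrier[simp,intro]: "A \<in> carrier_mat n m \<Longrightarrow> mat_adjoint A \<in> carrier_mat m n"
  unfolding carrier_mat_def by simp

lemma adj_index[simp]: "i < dim_col A \<Longrightarrow> j < dim_row A \<Longrightarrow>
   mat_adjoint A $$ (i,j) = cnj (A $$ (j,i))"
  unfolding mat_adjoint_def by (auto simp: mat_of_rows_def)

lemma adj_adj[simp]: "mat_adjoint (mat_adjoint (A::complex mat)) = A"
  by (rule eq_matI, auto)

lemma adj_mult: assumes "(A::complex mat) \<in> carrier_mat n k" "B \<in> carrier_mat k m"
  shows "mat_adjoint (A * B) = mat_adjoint B * mat_adjoint A"
proof (rule eq_matI)
  fix i j assume ij: "i < dim_row (mat_adjoint B * mat_adjoint A)" "j < dim_col (mat_adjoint B * mat_adjoint A)"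
  hence i: "i < m" and j: "j < n" using assms by auto
  have "mat_adjoint (A * B) $$ (i, j) = cnj (\<Sum>l<k. A $$ (j,l) * B $$ (l,i))"
    using assms i j by (auto simp: scalar_prod_def atLeast0LessThan)
  also have "\<dots> = (\<Sum>l<k. cnj (B $$ (l,i)) * cnj (A $$ (j,l)))"
    by (simp add: cnj_sum mult.commute)
  also have "\<dots> = (mat_adjoint B * mat_adjoint A) $$ (i,j)"
    using assms i j by (auto simp: scalar_prod_def atLeast0LessThan intro!: sum.cong)
  finally show "mat_adjoint (A * B) $$ (i, j) = (mat_adjoint B * mat_adjoint A) $$ (i,j)" .
qed (insert assms, auto)

lemma adj_add: assumes "(A::complex mat) \<in> carrier_mat n m" "B \<in> carrier_mat n m"
  shows "mat_adjoint (A + B) = mat_adjoint A + mat_adjoint B"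
  by (rule eq_matI, insert assms, auto)

lemma adj_uminus: assumes "(A::complex mat) \<in> carrier_mat n m"
  shows "mat_adjoint (- A) = - mat_adjoint A"
  by (rule eq_matI, insert assms, auto)

lemma adj_one[simp]: "mat_adjoint (1\<^sub>m n :: complex mat) = 1\<^sub>m n"
  by (rule eq_matI, auto)

lemma cnj_inner: assumes "(v::complex vec) \<in> carrier_vec n" "w \<in> carrier_vec n"
  shows "cnj (v \<bullet>c w) = w \<bullet>c v"
  using assms by (auto simp: scalar_prod_def cnj_sum mult.commute)

lemma inner_self_real: "(v::complex vec) \<bullet>c v = of_real (Re (v \<bullet>c v))" "Re (v \<bullet>c v) \<ge> 0"
  "Im (v \<bullet>c v) = 0"
proof -
  have e: "v \<bullet>c v = (\<Sum>i<dim_vec v. v $ i * cnj (v $ i))"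
    by (simp add: scalar_prod_def atLeast0LessThan)
  show i: "Im (v \<bullet>c v) = 0" unfolding e Im_sum by simp
  show "Re (v \<bullet>c v) \<ge> 0" unfolding e Re_sum by (intro sum_nonneg) simp
  show "v \<bullet>c v = of_real (Re (v \<bullet>c v))" using i by (simp add: complex_eq_iff)
qed

lemma inner_self_zero: assumes "(v::complex vec) \<in> carrier_vec n"
  shows "Re (v \<bullet>c v) = 0 \<longleftrightarrow> v = 0\<^sub>v n"
proof -
  have "v \<bullet>c v = 0 \<longleftrightarrow> v = 0\<^sub>v n" using conjugate_square_eq_0_vec[OF assms] by simp
  moreover have "Re (v \<bullet>c v) = 0 \<longleftrightarrow> v \<bullet>c v = 0" by (simp add: complex_eq_iff inner_self_real(3))
  ultimately show ?thesis by simp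
qed

lemma adj_inner: assumes "(A::complex mat) \<in> carrier_mat n m" "v \<in> carrier_vec m" "w \<in> carrier_vec n"
  shows "(A *\<^sub>v v) \<bullet>c w = v \<bullet>c (mat_adjoint A *\<^sub>v w)"
proof -
  have "(A *\<^sub>v v) \<bullet>c w = (\<Sum>i<n. (\<Sum>k<m. A $$ (i,k) * v $ k) * cnj (w $ i))"
    using assms by (auto simp: scalar_prod_def atLeast0LessThan)
  also have "\<dots> = (\<Sum>i<n. \<Sum>k<m. A $$ (i,k) * v $ k * cnj (w $ i))"
    by (simp add: sum_distrib_right)
  also have "\<dots> = (\<Sum>k<m. \<Sum>i<n. A $$ (i,k) * v $ k * cnj (w $ i))"
    by (rule sum.swap)
  also have "\<dots> = (\<Sum>k<m. v $ k * cnj (\<Sum>i<n. cnj (A $$ (i,k)) * w $ i))"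
    unfolding cnj_sum complex_cnj_mult complex_cnj_cnj sum_distrib_left
    by (intro sum.cong refl) (simp only: mult.commute mult.left_commute)
  also have "\<dots> = v \<bullet>c (mat_adjoint A *\<^sub>v w)"
    using assms by (auto simp: scalar_prod_def atLeast0LessThan)
  finally show ?thesis .
qed



lemma ip_add_left: assumes "(x::complex vec) \<in> carrier_vec n" "y \<in> carrier_vec n" "z \<in> carrier_vec n"
  shows "(x + y) \<bullet>c z = x \<bullet>c z + y \<bullet>c z"
  using assms by (simp add: add_scalar_prod_distrib[of _ n])

lemma ip_add_right: assumes "(x::complex vec) \<in> carrier_vec n" "y \<in> carrier_vec n" "z \<in> carrier_vec n"
  shows "x \<bullet>c (y + z) = x \<bullet>c y + x \<bullet>c z"
  using assms by (simp add: conjugate_add_vec[of _ n] scalar_prod_add_distrib[of _ n])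

lemma ip_smult_left: assumes "(x::complex vec) \<in> carrier_vec n" "z \<in> carrier_vec n"
  shows "(c \<cdot>\<^sub>v x) \<bullet>c z = c * (x \<bullet>c z)"
  using assms by simp

lemma ip_smult_right: assumes "(x::complex vec) \<in> carrier_vec n" "z \<in> carrier_vec n"
  shows "x \<bullet>c (c \<cdot>\<^sub>v z) = cnj c * (x \<bullet>c z)"
  using assms by (simp add: conjugate_smult_vec)

lemma herm_inner: assumes "hermitian_mat M" "M \<in> carrier_mat n n" "v \<in> carrier_vec n" "w \<in> carrier_vec n"
  shows "(M *\<^sub>v v) \<bullet>c w = v \<bullet>c (M *\<^sub>v w)"
  using adj_inner[OF assms(2-4)] assms(1) unfolding hermitian_mat_def by simp

lemma psd_carrier: "psd_mat M \<Longrightarrow> M \<in> carrier_mat (dim_row M) (dim_row M)"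
  unfolding psd_mat_def hermitian_mat_def square_mat.simps carrier_mat_def by simp

lemma psd_kernel: assumes psd: "psd_mat M" and M: "M \<in> carrier_mat n n" and v: "v \<in> carrier_vec n"
  and z: "Re ((M *\<^sub>v v) \<bullet>c v) = 0"
  shows "M *\<^sub>v v = 0\<^sub>v n"
proof (rule ccontr)
  assume ne: "M *\<^sub>v v \<noteq> 0\<^sub>v n"
  define w where "w = M *\<^sub>v v"
  have w: "w \<in> carrier_vec n" unfolding w_def using M v by simp
  have herm: "hermitian_mat M" using psd unfolding psd_mat_def by simp
  define a where "a = Re (w \<bullet>c w)"
  define b where "b = Re ((M *\<^sub>v w) \<bullet>c w)"
  have a0: "a > 0" using inner_self_zero[OF w] inner_self_real(2)[of w] ne unfolding a_def w_def by auto
  have b0: "b \<ge> 0" using psd w M unfolding b_def psd_mat_def by auto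
  define t where "t = - a / (b + 1)"
  define u where "u = v + of_real t \<cdot>\<^sub>v w"
  have u: "u \<in> carrier_vec n" unfolding u_def using v w by simp
  have Mu: "M *\<^sub>v u = w + of_real t \<cdot>\<^sub>v (M *\<^sub>v w)"
    unfolding u_def w_def using M v by (simp add: mult_add_distrib_mat_vec[OF M] mult_mat_vec[OF M])
  have Mw: "M *\<^sub>v w \<in> carrier_vec n" using M w by simp
  have e2: "(M *\<^sub>v w) \<bullet>c v = w \<bullet>c w" using herm_inner[OF herm M w v] unfolding w_def by simp
  have "(M *\<^sub>v u) \<bullet>c u = w \<bullet>c v + of_real t * (w \<bullet>c w) + of_real t * ((M *\<^sub>v w) \<bullet>c v)
      + of_real t * of_real t * ((M *\<^sub>v w) \<bullet>c w)"
    unfolding Mu unfolding u_def using v w Mw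
    by (simp add: ip_add_left[of _ n] ip_add_right[of _ n] ip_smult_left[of _ n] ip_smult_right[of _ n] algebra_simps)
  hence "Re ((M *\<^sub>v u) \<bullet>c u) = Re ((M *\<^sub>v v) \<bullet>c v) + 2 * t * a + t * t * b"
    unfolding e2 a_def b_def by (simp add: w_def)
  also have "\<dots> = a * a * (- b - 2) / ((b + 1) * (b+1))"
  proof -
    have nz: "(b + 1) * (b + 1) \<noteq> 0" using b0 by simp
    have tc: "t * (b+1) = -a" unfolding t_def using b0 by simp
    have "(2*t*a + t*t*b) * ((b+1)*(b+1)) = 2*a*(t*(b+1))*(b+1) + (t*(b+1))*(t*(b+1))*b"
      by (simp add: algebra_simps)
    also have "\<dots> = a*a*(-b-2)" unfolding tc by (simp add: algebra_simps)
    finally have "2*t*a + t*t*b = a*a*(-b-2) / ((b+1)*(b+1))" using nz by (simp add: eq_divide_eq)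
    thus ?thesis unfolding z by simp
  qed
  also have "\<dots> < 0" using a0 b0 by (intro divide_neg_pos) (auto simp: mult_pos_neg)
  finally have "Re ((M *\<^sub>v u) \<bullet>c u) < 0" .
  moreover have "Re ((M *\<^sub>v u) \<bullet>c u) \<ge> 0" using psd u M unfolding psd_mat_def by auto
  ultimately show False by simp
qed

lemma mat_vec_zero: "(X::complex mat) \<in> carrier_mat n m \<Longrightarrow> X *\<^sub>v 0\<^sub>v m = 0\<^sub>v n"
  by (intro eq_vecI) (simp_all add: scalar_prod_def)

lemma adj_mv_carrier: "(B::complex mat) \<in> carrier_mat p q \<Longrightarrow> mat_adjoint B *\<^sub>v v \<in> carrier_vec q"
  by (rule carrier_vecI) (simp add: carrier_matD)

lemma psd_herm: "psd_mat M \<Longrightarrow> hermitian_mat M" unfolding psd_mat_def by simp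

lemma pd_sum_iff: assumes pA: "psd_mat A" and pS: "psd_mat S" and A: "A \<in> carrier_mat n n" and S: "S \<in> carrier_mat n n"
  shows "pd_mat (A + S) \<longleftrightarrow> (\<forall>v\<in>carrier_vec n. A *\<^sub>v v = 0\<^sub>v n \<and> S *\<^sub>v v = 0\<^sub>v n \<longrightarrow> v = 0\<^sub>v n)"
proof -
  have "mat_adjoint (A + S) = A + S" using adj_add[OF A S] pA pS
    unfolding psd_mat_def hermitian_mat_def by simp
  moreover have dims: "dim_row S = n" "dim_col S = n" "dim_row A = n" "dim_col A = n" using A S by auto
  ultimately have herm: "hermitian_mat (A + S)" unfolding hermitian_mat_def by simp
  have dr: "dim_row (A + S) = n" using dims by simp
  have ipe: "((A + S) *\<^sub>v v) \<bullet>c v = (A *\<^sub>v v) \<bullet>c v + (S *\<^sub>v v) \<bullet>c v" if v: "v \<in> carrier_vec n" for v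
    using v A S dims by (simp add: add_mult_distrib_mat_vec[OF A S] ip_add_left[of _ n])
  have ra: "Re ((A *\<^sub>v v) \<bullet>c v) \<ge> 0" if "v \<in> carrier_vec n" for v using pA that A unfolding psd_mat_def by auto
  have rs: "Re ((S *\<^sub>v v) \<bullet>c v) \<ge> 0" if "v \<in> carrier_vec n" for v using pS that S unfolding psd_mat_def by auto
  show ?thesis
  proof
    assume pd: "pd_mat (A + S)"
    show "\<forall>v\<in>carrier_vec n. A *\<^sub>v v = 0\<^sub>v n \<and> S *\<^sub>v v = 0\<^sub>v n \<longrightarrow> v = 0\<^sub>v n"
    proof (intro ballI impI, rule ccontr)
      fix v :: "complex vec" assume v: "v \<in> carrier_vec n" and k: "A *\<^sub>v v = 0\<^sub>v n \<and> S *\<^sub>v v = 0\<^sub>v n" and ne: "v \<noteq> 0\<^sub>v n"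
      have "0 < Re (((A + S) *\<^sub>v v) \<bullet>c v)" using pd v ne unfolding pd_mat_def dr by auto
      thus False using ipe[OF v] k v by simp
    qed
  next
    assume H: "\<forall>v\<in>carrier_vec n. A *\<^sub>v v = 0\<^sub>v n \<and> S *\<^sub>v v = 0\<^sub>v n \<longrightarrow> v = 0\<^sub>v n"
    show "pd_mat (A + S)" unfolding pd_mat_def dr
    proof (intro conjI herm ballI impI)
      fix v :: "complex vec" assume v: "v \<in> carrier_vec n" and ne: "v \<noteq> 0\<^sub>v n"
      show "0 < Re (((A + S) *\<^sub>v v) \<bullet>c v)"
      proof (rule ccontr)
        assume "\<not> ?thesis"
        hence "Re ((A *\<^sub>v v) \<bullet>c v) = 0" "Re ((S *\<^sub>v v) \<bullet>c v) = 0"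
          using ipe[OF v] ra[OF v] rs[OF v] by auto
        hence "A *\<^sub>v v = 0\<^sub>v n" "S *\<^sub>v v = 0\<^sub>v n" using psd_kernel[OF pA A v] psd_kernel[OF pS S v] by auto
        thus False using H v ne by auto
      qed
    qed
  qed
qed

lemma ker_sq: assumes h: "hermitian_mat S" and S: "S \<in> carrier_mat n n" and v: "v \<in> carrier_vec n"
  and z: "(S * S) *\<^sub>v v = 0\<^sub>v n"
  shows "S *\<^sub>v v = 0\<^sub>v n"
proof -
  have "(S *\<^sub>v v) \<bullet>c (S *\<^sub>v v) = (S *\<^sub>v (S *\<^sub>v v)) \<bullet>c v"
    using herm_inner[OF h S _ v, of "S *\<^sub>v v"] S v by simp
  also have "S *\<^sub>v (S *\<^sub>v v) = 0\<^sub>v n" using z S v by (simp add: assoc_mult_mat_vec[of _ n n _ n])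
  finally have "(S *\<^sub>v v) \<bullet>c (S *\<^sub>v v) = 0" using v by simp
  thus ?thesis using conjugate_square_eq_0_vec[of "S *\<^sub>v v" n] S v by simp
qed

lemma ker_BB: assumes B: "(B::complex mat) \<in> carrier_mat p q" and v: "v \<in> carrier_vec p"
  shows "(B * mat_adjoint B) *\<^sub>v v = 0\<^sub>v p \<longleftrightarrow> mat_adjoint B *\<^sub>v v = 0\<^sub>v q"
proof
  assume z: "(B * mat_adjoint B) *\<^sub>v v = 0\<^sub>v p"
  have Bv: "mat_adjoint B *\<^sub>v v \<in> carrier_vec q" using adj_mv_carrier[OF B] .
  have "(mat_adjoint B *\<^sub>v v) \<bullet>c (mat_adjoint B *\<^sub>v v) = (B *\<^sub>v (mat_adjoint B *\<^sub>v v)) \<bullet>c v"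
    using adj_inner[OF B Bv v] by simp
  also have "B *\<^sub>v (mat_adjoint B *\<^sub>v v) = 0\<^sub>v p" using z B v
    by (simp add: assoc_mult_mat_vec[of _ p q _ p])
  finally have "(mat_adjoint B *\<^sub>v v) \<bullet>c (mat_adjoint B *\<^sub>v v) = 0" using v by simp
  thus "mat_adjoint B *\<^sub>v v = 0\<^sub>v q" using conjugate_square_eq_0_vec[OF Bv] by simp
next
  assume "mat_adjoint B *\<^sub>v v = 0\<^sub>v q"
  thus "(B * mat_adjoint B) *\<^sub>v v = 0\<^sub>v p" using B v mat_vec_zero[OF B]
    by (simp add: assoc_mult_mat_vec[of _ p q _ p])
qed

lemma inv_iff_ker: assumes H: "(H::complex mat) \<in> carrier_mat N N"
  shows "invertible_mat H \<longleftrightarrow> (\<forall>v\<in>carrier_vec N. H *\<^sub>v v = 0\<^sub>v N \<longrightarrow> v = 0\<^sub>v N)"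
proof
  assume "invertible_mat H"
  then obtain X where HX: "H * X = 1\<^sub>m N" and XH: "X * H = 1\<^sub>m (dim_row X)"
    unfolding invertible_mat_def inverts_mat_def using H by auto
  have X: "X \<in> carrier_mat N N"
  proof -
    have "dim_col X = N" using arg_cong[OF HX, of dim_col] by simp
    moreover have "dim_row X = N" using arg_cong[OF XH, of dim_col] H by simp
    ultimately show ?thesis by auto
  qed
  show "\<forall>v\<in>carrier_vec N. H *\<^sub>v v = 0\<^sub>v N \<longrightarrow> v = 0\<^sub>v N"
  proof (intro ballI impI)
    fix v assume v: "v \<in> carrier_vec N" and z: "H *\<^sub>v v = 0\<^sub>v N"
    have "v = (X * H) *\<^sub>v v" using XH X v by simp
    also have "\<dots> = X *\<^sub>v (H *\<^sub>v v)" using X H v by (simp add: assoc_mult_mat_vec[of _ N N _ N])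
    finally show "v = 0\<^sub>v N" using z mat_vec_zero[OF X] by simp
  qed
next
  assume K: "\<forall>v\<in>carrier_vec N. H *\<^sub>v v = 0\<^sub>v N \<longrightarrow> v = 0\<^sub>v N"
  have "det H \<noteq> 0" using det_0_iff_vec_prod_zero[OF H] K by auto
  from det_non_zero_imp_unit[OF H this, of undefined]
  obtain X where X: "X \<in> carrier_mat N N" and "X * H = 1\<^sub>m N" "H * X = 1\<^sub>m N"
    unfolding Units_def ring_mat_simps by auto
  thus "invertible_mat H" unfolding invertible_mat_def inverts_mat_def using H by auto
qed



lemma zero_app: "0\<^sub>v (p+q) = (0\<^sub>v p @\<^sub>v 0\<^sub>v q :: complex vec)"
  by (intro eq_vecI) auto

lemma app_zero_iff: assumes "(a::complex vec) \<in> carrier_vec p" "b \<in> carrier_vec q"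
  shows "a @\<^sub>v b = 0\<^sub>v (p+q) \<longleftrightarrow> a = 0\<^sub>v p \<and> b = 0\<^sub>v q"
  unfolding zero_app using append_vec_eq[OF assms(1) zero_carrier_vec[of p]] by simp

lemma H_ker: assumes A: "A \<in> carrier_mat p p" and B: "B \<in> carrier_mat p q" and C: "C \<in> carrier_mat q q"
  and pA: "psd_mat A" and pC: "psd_mat C"
  shows "(\<forall>v\<in>carrier_vec (p+q). four_block_mat A B (mat_adjoint B) (- C) *\<^sub>v v = 0\<^sub>v (p+q) \<longrightarrow> v = 0\<^sub>v (p+q))
    \<longleftrightarrow> (\<forall>x\<in>carrier_vec p. A *\<^sub>v x = 0\<^sub>v p \<and> mat_adjoint B *\<^sub>v x = 0\<^sub>v q \<longrightarrow> x = 0\<^sub>v p)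
      \<and> (\<forall>y\<in>carrier_vec q. C *\<^sub>v y = 0\<^sub>v q \<and> B *\<^sub>v y = 0\<^sub>v p \<longrightarrow> y = 0\<^sub>v q)"
    (is "?L \<longleftrightarrow> ?R1 \<and> ?R2")
proof -
  let ?H = "four_block_mat A B (mat_adjoint B) (- C)"
  have aB: "mat_adjoint B \<in> carrier_mat q p" using B by simp
  have mC: "- C \<in> carrier_mat q q" using C by simp
  have Hm: "?H *\<^sub>v (x @\<^sub>v y) = (A *\<^sub>v x + B *\<^sub>v y) @\<^sub>v (mat_adjoint B *\<^sub>v x + (- C) *\<^sub>v y)"
    if "x \<in> carrier_vec p" "y \<in> carrier_vec q" for x y
    by (rule four_block_mat_mult_vec[OF A B aB mC that])
  have Cneg: "(- C) *\<^sub>v y = - (C *\<^sub>v y)" if "y \<in> carrier_vec q" for y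
    using that C by simp
  show ?thesis
  proof
    assume L: ?L
    show "?R1 \<and> ?R2"
    proof (intro conjI ballI impI)
      fix x :: "complex vec" assume x: "x \<in> carrier_vec p" and k: "A *\<^sub>v x = 0\<^sub>v p \<and> mat_adjoint B *\<^sub>v x = 0\<^sub>v q"
      have "?H *\<^sub>v (x @\<^sub>v 0\<^sub>v q) = 0\<^sub>v p @\<^sub>v 0\<^sub>v q"
        unfolding Hm[OF x zero_carrier_vec] using k mat_vec_zero[OF B] mat_vec_zero[OF mC] by simp
      hence "x @\<^sub>v 0\<^sub>v q = 0\<^sub>v (p+q)" using L x unfolding zero_app[symmetric] by auto
      thus "x = 0\<^sub>v p" using app_zero_iff[OF x zero_carrier_vec] by simp
    next
      fix y :: "complex vec" assume y: "y \<in> carrier_vec q" and k: "C *\<^sub>v y = 0\<^sub>v q \<and> B *\<^sub>v y = 0\<^sub>v p"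
      have "?H *\<^sub>v (0\<^sub>v p @\<^sub>v y) = 0\<^sub>v p @\<^sub>v 0\<^sub>v q"
        unfolding Hm[OF zero_carrier_vec y] Cneg[OF y] using k mat_vec_zero[OF A] mat_vec_zero[OF aB] by simp
      hence "0\<^sub>v p @\<^sub>v y = 0\<^sub>v (p+q)" using L y unfolding zero_app[symmetric] by auto
      thus "y = 0\<^sub>v q" using app_zero_iff[OF zero_carrier_vec y] by simp
    qed
  next
    assume R: "?R1 \<and> ?R2"
    show ?L
    proof (intro ballI impI)
      fix v :: "complex vec" assume v: "v \<in> carrier_vec (p+q)" and z: "?H *\<^sub>v v = 0\<^sub>v (p+q)"
      define x where "x = vec_first v p"
      define y where "y = vec_last v q"
      have x: "x \<in> carrier_vec p" and y: "y \<in> carrier_vec q" unfolding x_def y_def by auto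
      have vxy: "v = x @\<^sub>v y" unfolding x_def y_def using v by simp
      have Ax: "A *\<^sub>v x \<in> carrier_vec p" using A x by simp
      have By: "B *\<^sub>v y \<in> carrier_vec p" using B y by simp
      have Bx: "mat_adjoint B *\<^sub>v x \<in> carrier_vec q" using aB x by simp
      have Cy: "C *\<^sub>v y \<in> carrier_vec q" using C y by simp
      have "(A *\<^sub>v x + B *\<^sub>v y) @\<^sub>v (mat_adjoint B *\<^sub>v x + (- C) *\<^sub>v y) = 0\<^sub>v (p+q)"
        using z unfolding vxy Hm[OF x y] .
      hence e1: "A *\<^sub>v x + B *\<^sub>v y = 0\<^sub>v p" and e2: "mat_adjoint B *\<^sub>v x + - (C *\<^sub>v y) = 0\<^sub>v q"
        using app_zero_iff[of _ p _ q] Ax By Bx Cy unfolding Cneg[OF y] by auto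
      define \<alpha> where "\<alpha> = (A *\<^sub>v x) \<bullet>c x"
      define \<gamma> where "\<gamma> = (C *\<^sub>v y) \<bullet>c y"
      have "(A *\<^sub>v x + B *\<^sub>v y) \<bullet>c x = 0" unfolding e1 using x by simp
      hence f1: "\<alpha> + y \<bullet>c (mat_adjoint B *\<^sub>v x) = 0"
        unfolding \<alpha>_def ip_add_left[OF Ax By x] adj_inner[OF B y x] .
      have "(mat_adjoint B *\<^sub>v x + - (C *\<^sub>v y)) \<bullet>c y = 0" unfolding e2 using y by simp
      hence "(mat_adjoint B *\<^sub>v x) \<bullet>c y + (- (C *\<^sub>v y)) \<bullet>c y = 0"
        using ip_add_left[OF Bx _ y, of "- (C *\<^sub>v y)"] Cy by simp
      moreover have "(- (C *\<^sub>v y)) \<bullet>c y = - \<gamma>" unfolding \<gamma>_def using Cy y C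
        by (subst scalar_prod_uminus_left) auto
      ultimately have f2: "(mat_adjoint B *\<^sub>v x) \<bullet>c y = \<gamma>" by (simp add: add_eq_0_iff)
      have "y \<bullet>c (mat_adjoint B *\<^sub>v x) = cnj \<gamma>" using cnj_inner[OF Bx y] f2 by simp
      with f1 have "\<alpha> + cnj \<gamma> = 0" by simp
      hence "Re (\<alpha> + cnj \<gamma>) = Re 0" by (simp only:)
      hence "Re \<alpha> + Re \<gamma> = 0" by (simp only: plus_complex.sel cnj.sel zero_complex.sel)
      moreover have "Re \<alpha> \<ge> 0" using pA A x unfolding \<alpha>_def psd_mat_def by auto
      moreover have "Re \<gamma> \<ge> 0" using pC C y unfolding \<gamma>_def psd_mat_def by auto
      ultimately have "Re \<alpha> = 0" "Re \<gamma> = 0" by auto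
      hence Ax0: "A *\<^sub>v x = 0\<^sub>v p" and Cy0: "C *\<^sub>v y = 0\<^sub>v q"
        using psd_kernel[OF pA A x] psd_kernel[OF pC C y] unfolding \<alpha>_def \<gamma>_def by auto
      have By0: "B *\<^sub>v y = 0\<^sub>v p" using e1 By unfolding Ax0 by simp
      have Bx0: "mat_adjoint B *\<^sub>v x = 0\<^sub>v q" using e2 Bx unfolding Cy0 by simp
      have "x = 0\<^sub>v p" using R x Ax0 Bx0 by auto
      moreover have "y = 0\<^sub>v q" using R y Cy0 By0 by auto
      ultimately show "v = 0\<^sub>v (p+q)" unfolding vxy zero_app by simp
    qed
  qed
qed



lemma adjW_entry: assumes W: "(W::complex mat) \<in> carrier_mat n m" and i: "i < m" and j: "j < m"
  shows "(mat_adjoint W * W) $$ (i,j) = col W j \<bullet>c col W i"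
  using W i j by (auto simp: scalar_prod_def mult.commute intro!: sum.cong)

lemma unitary_ext: fixes u :: "complex vec"
  assumes u: "u \<in> carrier_vec n" and uu: "u \<bullet>c u = 1" and n: "n > 0"
  shows "\<exists>W. W \<in> carrier_mat n n \<and> mat_adjoint W * W = 1\<^sub>m n \<and> col W 0 = u"
proof -
  have u0: "u \<noteq> 0\<^sub>v n" using uu u by auto
  interpret cof_vec_space n "TYPE(complex)" .
  define b where "b = basis_completion u"
  from basis_completion[OF u u0, folded b_def]
  have dist_b: "distinct b" and indep: "\<not> lin_dep (set b)" and bc: "set b \<subseteq> carrier_vec n"
    and hdb: "hd b = u" and len_b: "length b = n" by auto
  from hdb len_b n obtain vs where bv: "b = u # vs" by (cases b, auto)
  define ws where "ws = gram_schmidt n b"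
  from gram_schmidt_result[OF bc dist_b indep refl, folded ws_def]
  have wsc: "set ws \<subseteq> carrier_vec n" and orth: "corthogonal ws" and len: "length ws = n"
    using len_b by auto
  have hdws: "hd ws = u" unfolding ws_def bv using gram_schmidt_hd[OF u] by simp
  define nrm where "nrm = (\<lambda>w::complex vec. 1 / sqrt (Re (w \<bullet>c w)))"
  define ws' where "ws' = map (\<lambda>w. complex_of_real (nrm w) \<cdot>\<^sub>v w) ws"
  define W where "W = mat_of_cols n ws'"
  have len': "length ws' = n" unfolding ws'_def using len by simp
  have wsi: "ws ! i \<in> carrier_vec n" if "i < n" for i using wsc len that by auto
  have ws'i: "ws' ! i = complex_of_real (nrm (ws ! i)) \<cdot>\<^sub>v ws ! i" if "i < n" for i
    unfolding ws'_def using that len by simp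
  have colW: "col W i = ws' ! i" if "i < n" for i
    unfolding W_def using that len' ws'i wsi by simp
  have W: "W \<in> carrier_mat n n" unfolding W_def using mat_of_cols_carrier(1)[of n ws'] len' by simp
  have ws0: "ws ! 0 = u" using hdws len n by (cases ws) auto
  have "nrm u = 1" unfolding nrm_def uu by simp
  hence c0: "col W 0 = u" using colW[OF n] ws'i[OF n] ws0 u by simp
  have "mat_adjoint W * W = 1\<^sub>m n"
  proof (rule eq_matI)
    fix i j assume "i < dim_row (1\<^sub>m n)" "j < dim_col (1\<^sub>m n)"
    hence i: "i < n" and j: "j < n" by auto
    have "(mat_adjoint W * W) $$ (i,j) = col W j \<bullet>c col W i" by (rule adjW_entry[OF W i j])
    also have "\<dots> = complex_of_real (nrm (ws ! j)) * complex_of_real (nrm (ws ! i)) * (ws ! j \<bullet>c ws ! i)"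
      unfolding colW[OF i] colW[OF j] ws'i[OF i] ws'i[OF j] using wsi[OF i] wsi[OF j]
      by (simp add: conjugate_smult_vec)
    also have "\<dots> = 1\<^sub>m n $$ (i,j)"
    proof (cases "i = j")
      case True
      let ?w = "ws ! i"
      have ne: "?w \<bullet>c ?w \<noteq> 0" using orth i len True unfolding corthogonal_def by auto
      define r where "r = Re (?w \<bullet>c ?w)"
      have wr: "?w \<bullet>c ?w = complex_of_real r" unfolding r_def by (rule inner_self_real(1))
      have "r \<noteq> 0" using ne wr by auto
      moreover have "r \<ge> 0" unfolding r_def by (rule inner_self_real(2))
      ultimately have r0: "r > 0" by simp
      have "nrm ?w * nrm ?w * r = 1" unfolding nrm_def r_def[symmetric] using r0
        by (simp add: field_simps)
      hence "complex_of_real (nrm ?w) * complex_of_real (nrm ?w) * (?w \<bullet>c ?w) = 1"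
        unfolding wr by (metis of_real_1 of_real_mult)
      thus ?thesis using True i by simp
    next
      case False
      have "ws ! j \<bullet>c ws ! i = 0" using orth i j len False unfolding corthogonal_def by auto
      thus ?thesis using False i j by simp
    qed
    finally show "(mat_adjoint W * W) $$ (i,j) = 1\<^sub>m n $$ (i,j)" .
  qed (insert W, auto)
  thus ?thesis using W c0 by blast
qed



lemma sum_shift0: "(\<Sum>k\<in>{0..<Suc m}. f k) = f 0 + (\<Sum>k\<in>{0..<m}. f (Suc k))"
  by (simp add: sum.atLeast0_lessThan_Suc_shift del: sum.op_ivl_Suc)

lemma mult_entry: assumes "(X::complex mat) \<in> carrier_mat n k" "Y \<in> carrier_mat k m" "i < n" "j < m"
  shows "(X * Y) $$ (i,j) = (\<Sum>l\<in>{0..<k}. X $$ (i,l) * Y $$ (l,j))"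
  using assms by (simp add: scalar_prod_def)

lemma mv_entry: assumes "(X::complex mat) \<in> carrier_mat n k" "v \<in> carrier_vec k" "i < n"
  shows "(X *\<^sub>v v) $ i = (\<Sum>l\<in>{0..<k}. X $$ (i,l) * v $ l)"
  using assms by (simp add: scalar_prod_def)

lemma unitary_right: assumes "(U::complex mat) \<in> carrier_mat n n" "mat_adjoint U * U = 1\<^sub>m n"
  shows "U * mat_adjoint U = 1\<^sub>m n"
  using mat_mult_left_right_inverse[OF adj_carrier[OF assms(1)] assms(1) assms(2)] .

lemma herm_eigen_real: assumes h: "hermitian_mat A" and A: "A \<in> carrier_mat n n"
  and u: "u \<in> carrier_vec n" and uu: "u \<bullet>c u = 1" and e: "A *\<^sub>v u = l \<cdot>\<^sub>v u"
  shows "l = complex_of_real (Re l)"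
proof -
  have "l = (A *\<^sub>v u) \<bullet>c u" unfolding e using u uu by simp
  also have "\<dots> = u \<bullet>c (A *\<^sub>v u)" by (rule herm_inner[OF h A u u])
  also have "\<dots> = cnj l" unfolding e using u uu by (simp add: conjugate_smult_vec)
  finally have "l = cnj l" .
  hence "Im l = 0" by (metis cnj.simps(2) complex.expand zero_complex.simps(2) cnj.simps(1) neg_equal_zero)
  thus ?thesis by (simp add: complex_eq_iff)
qed

lemma spectral: assumes "hermitian_mat A" "A \<in> carrier_mat n n"
  shows "\<exists>U d. U \<in> carrier_mat n n \<and> mat_adjoint U * U = 1\<^sub>m n \<and>
     (\<forall>j<n. A *\<^sub>v col U j = complex_of_real (d j) \<cdot>\<^sub>v col U j)"
  using assms
proof (induction n arbitrary: A)
  case 0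
  show ?case by (rule exI[of _ "1\<^sub>m 0"], rule exI[of _ "\<lambda>_. 0"]) (auto intro!: eq_matI)
next
  case (Suc m)
  have h: "hermitian_mat A" and A: "A \<in> carrier_mat (Suc m) (Suc m)" using Suc.prems by auto
  obtain l where "eigenvalue A l" using spectrum_non_empty[OF A] unfolding spectrum_def by auto
  from find_eigenvector[OF A this] obtain v where
    v: "v \<in> carrier_vec (Suc m)" and v0: "v \<noteq> 0\<^sub>v (Suc m)" and Av: "A *\<^sub>v v = l \<cdot>\<^sub>v v"
    unfolding eigenvector_def using A by auto
  define r where "r = Re (v \<bullet>c v)"
  have vr: "v \<bullet>c v = complex_of_real r" unfolding r_def by (rule inner_self_real(1))
  have "r \<noteq> 0" using vr v0 inner_self_zero[OF v] unfolding r_def by auto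
  moreover have "r \<ge> 0" unfolding r_def by (rule inner_self_real(2))
  ultimately have r0: "r > 0" by simp
  define u where "u = complex_of_real (1 / sqrt r) \<cdot>\<^sub>v v"
  have u: "u \<in> carrier_vec (Suc m)" unfolding u_def using v by simp
  have "u \<bullet>c u = complex_of_real (1 / sqrt r) * complex_of_real (1 / sqrt r) * (v \<bullet>c v)"
    unfolding u_def using v by (simp add: conjugate_smult_vec)
  also have "\<dots> = complex_of_real (1 / sqrt r * (1 / sqrt r) * r)" by (simp only: vr of_real_mult)
  also have "1 / sqrt r * (1 / sqrt r) * r = 1" using r0 by (simp add: field_simps)
  finally have uu: "u \<bullet>c u = 1" by simp
  have Au: "A *\<^sub>v u = l \<cdot>\<^sub>v u" unfolding u_def using A v Av
    by (simp add: mult_mat_vec[OF A] smult_smult_assoc mult.commute)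
  define \<mu> where "\<mu> = Re l"
  have l\<mu>: "l = complex_of_real \<mu>" unfolding \<mu>_def by (rule herm_eigen_real[OF h A u uu Au])
  obtain W where W: "W \<in> carrier_mat (Suc m) (Suc m)" and WW: "mat_adjoint W * W = 1\<^sub>m (Suc m)"
    and W0: "col W 0 = u" using unitary_ext[OF u uu] by auto
  have aW: "mat_adjoint W \<in> carrier_mat (Suc m) (Suc m)" using W by simp
  have WW': "W * mat_adjoint W = 1\<^sub>m (Suc m)" by (rule unitary_right[OF W WW])
  define M where "M = mat_adjoint W * A * W"
  have M: "M \<in> carrier_mat (Suc m) (Suc m)" unfolding M_def using mult_carrier_mat[OF mult_carrier_mat[OF aW A] W] .
  have aWA: "mat_adjoint W * A \<in> carrier_mat (Suc m) (Suc m)" using aW A by simp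
  have AW: "A * W = W * M"
  proof -
    have "W * M = (W * (mat_adjoint W * A)) * W" unfolding M_def
      by (rule assoc_mult_mat[symmetric, OF W aWA W])
    also have "\<dots> = ((W * mat_adjoint W) * A) * W"
      using assoc_mult_mat[symmetric, OF W aW A] by simp
    also have "\<dots> = A * W" unfolding WW' using A W by simp
    finally show ?thesis by simp
  qed
  have hM: "mat_adjoint M = M"
  proof -
    have "mat_adjoint M = mat_adjoint W * mat_adjoint (mat_adjoint W * A)"
      unfolding M_def by (rule adj_mult[of _ "Suc m" "Suc m"], insert aW A W, auto)
    also have "mat_adjoint (mat_adjoint W * A) = mat_adjoint A * W"
      by (subst adj_mult[OF aW A], simp)
    also have "mat_adjoint A = A" using h unfolding hermitian_mat_def by simp
    finally show ?thesis unfolding M_def using aW A W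
      by (simp add: assoc_mult_mat[of _ "Suc m" "Suc m" _ "Suc m" _ "Suc m"])
  qed
  have colM0: "col M 0 = l \<cdot>\<^sub>v unit_vec (Suc m) 0"
  proof -
    have "col M 0 = (mat_adjoint W * A) *\<^sub>v col W 0" unfolding M_def
      by (rule col_mult2[OF aWA W], simp)
    also have "\<dots> = mat_adjoint W *\<^sub>v (l \<cdot>\<^sub>v u)" unfolding W0 using aW A u Au by simp
    also have "\<dots> = l \<cdot>\<^sub>v (mat_adjoint W *\<^sub>v col W 0)" unfolding W0 using aW u by (simp add: mult_mat_vec)
    also have "mat_adjoint W *\<^sub>v col W 0 = col (mat_adjoint W * W) 0" by (rule col_mult2[OF aW W, symmetric], simp)
    finally show ?thesis unfolding WW by simp
  qed
  have Mi0: "M $$ (i,0) = (if i = 0 then l else 0)" if "i < Suc m" for i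
  proof -
    have "M $$ (i,0) = col M 0 $ i" using M that by simp
    thus ?thesis unfolding colM0 using that by simp
  qed
  have M0j: "M $$ (0,j) = (if j = 0 then l else 0)" if "j < Suc m" for j
  proof -
    have "M $$ (0,j) = mat_adjoint M $$ (0,j)" unfolding hM ..
    also have "\<dots> = cnj (M $$ (j,0))" using M that by simp
    finally show ?thesis using Mi0[OF that] l\<mu> by simp
  qed
  define M3 where "M3 = mat m m (\<lambda>(i,j). M $$ (Suc i, Suc j))"
  have M3: "M3 \<in> carrier_mat m m" unfolding M3_def by simp
  have hM3: "hermitian_mat M3" unfolding hermitian_mat_def
  proof
    show "square_mat M3" using M3 by simp
    show "mat_adjoint M3 = M3"
    proof (rule eq_matI)
      fix i j assume "i < dim_row M3" "j < dim_col M3"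
      hence i: "i < m" and j: "j < m" using M3 by auto
      have "mat_adjoint M3 $$ (i,j) = cnj (M $$ (Suc j, Suc i))" using i j unfolding M3_def by simp
      also have "\<dots> = mat_adjoint M $$ (Suc i, Suc j)" using i j M by simp
      also have "\<dots> = M3 $$ (i,j)" unfolding hM M3_def using i j by simp
      finally show "mat_adjoint M3 $$ (i,j) = M3 $$ (i,j)" .
    qed (insert M3, auto)
  qed
  from Suc.IH[OF hM3 M3] obtain U3 d3 where U3: "U3 \<in> carrier_mat m m"
    and UU3: "mat_adjoint U3 * U3 = 1\<^sub>m m"
    and E3: "\<And>j. j < m \<Longrightarrow> M3 *\<^sub>v col U3 j = complex_of_real (d3 j) \<cdot>\<^sub>v col U3 j" by auto
  define V where "V = mat (Suc m) (Suc m) (\<lambda>(i,j). if i = 0 \<and> j = 0 then 1 else if i = 0 \<or> j = 0 then 0 else U3 $$ (i-1, j-1))"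
  have V: "V \<in> carrier_mat (Suc m) (Suc m)" unfolding V_def by simp
  have Vs: "V $$ (0,0) = 1" "\<And>j. Suc j < Suc m \<Longrightarrow> V $$ (0, Suc j) = 0"
     "\<And>i. Suc i < Suc m \<Longrightarrow> V $$ (Suc i, 0) = 0" "\<And>i j. Suc i < Suc m \<Longrightarrow> Suc j < Suc m \<Longrightarrow> V $$ (Suc i, Suc j) = U3 $$ (i,j)"
    unfolding V_def by auto
  have VV: "mat_adjoint V * V = 1\<^sub>m (Suc m)"
  proof (rule eq_matI)
    fix i j assume "i < dim_row (1\<^sub>m (Suc m))" "j < dim_col (1\<^sub>m (Suc m))"
    hence i: "i < Suc m" and j: "j < Suc m" by auto
    have "(mat_adjoint V * V) $$ (i,j) = (\<Sum>k\<in>{0..<Suc m}. cnj (V $$ (k,i)) * V $$ (k,j))"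
      using mult_entry[OF adj_carrier[OF V] V i j] V i j by simp
    also have "\<dots> = cnj (V $$ (0,i)) * V $$ (0,j) + (\<Sum>k\<in>{0..<m}. cnj (V $$ (Suc k,i)) * V $$ (Suc k,j))"
      by (rule sum_shift0)
    also have "\<dots> = 1\<^sub>m (Suc m) $$ (i,j)"
    proof (cases i)
      case 0
      show ?thesis
      proof (cases j)
        case 0 thus ?thesis using \<open>i = 0\<close> Vs by simp
      next
        case (Suc j') thus ?thesis using \<open>i = 0\<close> Vs j by simp
      qed
    next
      case (Suc i')
      show ?thesis
      proof (cases j)
        case 0 thus ?thesis using \<open>i = Suc i'\<close> Vs i by simp
      next
        case (Suc j')
        have "(\<Sum>k\<in>{0..<m}. cnj (V $$ (Suc k,i)) * V $$ (Suc k,j)) = (\<Sum>k\<in>{0..<m}. cnj (U3 $$ (k,i')) * U3 $$ (k,j'))"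
          using \<open>i = Suc i'\<close> \<open>j = Suc j'\<close> i j Vs by (intro sum.cong) auto
        also have "\<dots> = (mat_adjoint U3 * U3) $$ (i',j')"
          using mult_entry[OF adj_carrier[OF U3] U3, of i' j'] U3 i j \<open>i = Suc i'\<close> \<open>j = Suc j'\<close> by simp
        also have "\<dots> = 1\<^sub>m (Suc m) $$ (i,j)" unfolding UU3 using \<open>i = Suc i'\<close> \<open>j = Suc j'\<close> i j by simp
        finally show ?thesis using \<open>i = Suc i'\<close> \<open>j = Suc j'\<close> Vs i by simp
      qed
    qed
    finally show "(mat_adjoint V * V) $$ (i,j) = 1\<^sub>m (Suc m) $$ (i,j)" .
  qed (insert V, auto)
  define d where "d = (\<lambda>j. if j = 0 then \<mu> else d3 (j - 1))"
  have MV: "M *\<^sub>v col V j = complex_of_real (d j) \<cdot>\<^sub>v col V j" if j: "j < Suc m" for j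
  proof (rule eq_vecI)
    fix i assume "i < dim_vec (complex_of_real (d j) \<cdot>\<^sub>v col V j)"
    hence i: "i < Suc m" using V by simp
    have "(M *\<^sub>v col V j) $ i = (\<Sum>k\<in>{0..<Suc m}. M $$ (i,k) * V $$ (k,j))"
      using mv_entry[OF M _ i, of "col V j"] V j by simp
    also have "\<dots> = M $$ (i,0) * V $$ (0,j) + (\<Sum>k\<in>{0..<m}. M $$ (i,Suc k) * V $$ (Suc k,j))"
      by (rule sum_shift0)
    also have "\<dots> = complex_of_real (d j) * V $$ (i,j)"
    proof (cases j)
      case 0
      have "(\<Sum>k\<in>{0..<m}. M $$ (i,Suc k) * V $$ (Suc k,j)) = 0" using Vs 0 by (intro sum.neutral) auto
      thus ?thesis using 0 Vs Mi0[OF i] l\<mu> i unfolding d_def by (cases i) auto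
    next
      case (Suc j')
      show ?thesis
      proof (cases i)
        case 0
        have "(\<Sum>k\<in>{0..<m}. M $$ (i,Suc k) * V $$ (Suc k,j)) = 0" using M0j 0 by (intro sum.neutral) auto
        thus ?thesis using 0 Suc Vs j by simp
      next
        case (Suc i')
        have "(\<Sum>k\<in>{0..<m}. M $$ (i,Suc k) * V $$ (Suc k,j)) = (\<Sum>k\<in>{0..<m}. M3 $$ (i',k) * U3 $$ (k,j'))"
          using \<open>i = Suc i'\<close> \<open>j = Suc j'\<close> i j Vs unfolding M3_def by (intro sum.cong) auto
        also have "\<dots> = (M3 *\<^sub>v col U3 j') $ i'"
          using mv_entry[OF M3 _, of "col U3 j'" i'] U3 i j \<open>i = Suc i'\<close> \<open>j = Suc j'\<close> by simp
        also have "\<dots> = complex_of_real (d3 j') * U3 $$ (i',j')"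
        proof -
          have j': "j' < m" using j \<open>j = Suc j'\<close> by simp
          show ?thesis unfolding E3[OF j'] using \<open>i = Suc i'\<close> i j' U3 by simp
        qed
        finally show ?thesis using \<open>i = Suc i'\<close> \<open>j = Suc j'\<close> i j Vs unfolding d_def by simp
      qed
    qed
    also have "\<dots> = (complex_of_real (d j) \<cdot>\<^sub>v col V j) $ i" using V i j by simp
    finally show "(M *\<^sub>v col V j) $ i = (complex_of_real (d j) \<cdot>\<^sub>v col V j) $ i" .
  qed (insert M V, auto)
  define U where "U = W * V"
  have U: "U \<in> carrier_mat (Suc m) (Suc m)" unfolding U_def using W V by simp
  have UU: "mat_adjoint U * U = 1\<^sub>m (Suc m)"
  proof -
    have aV: "mat_adjoint V \<in> carrier_mat (Suc m) (Suc m)" using V by simp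
    have WV: "W * V \<in> carrier_mat (Suc m) (Suc m)" using W V by simp
    have "mat_adjoint U * U = mat_adjoint V * (mat_adjoint W * (W * V))"
      unfolding U_def adj_mult[OF W V] by (rule assoc_mult_mat[OF aV aW WV])
    also have "mat_adjoint W * (W * V) = (mat_adjoint W * W) * V"
      by (rule assoc_mult_mat[symmetric, OF aW W V])
    also have "mat_adjoint V * ((mat_adjoint W * W) * V) = 1\<^sub>m (Suc m)" unfolding WW using V VV by simp
    finally show ?thesis .
  qed
  have EU: "A *\<^sub>v col U j = complex_of_real (d j) \<cdot>\<^sub>v col U j" if j: "j < Suc m" for j
  proof -
    have cU: "col U j = W *\<^sub>v col V j" unfolding U_def by (rule col_mult2[OF W V j])
    have cV: "col V j \<in> carrier_vec (Suc m)" using V by (intro carrier_vecI) simp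
    have "A *\<^sub>v col U j = (A * W) *\<^sub>v col V j" unfolding cU using A W cV by simp
    also have "\<dots> = W *\<^sub>v (M *\<^sub>v col V j)" unfolding AW using W M cV by simp
    also have "\<dots> = complex_of_real (d j) \<cdot>\<^sub>v col U j" unfolding MV[OF j] cU using W cV
      by (simp add: mult_mat_vec)
    finally show ?thesis .
  qed
  show ?case using U UU EU by blast
qed



lemma mat_col_eqI: assumes "(A::complex mat) \<in> carrier_mat n m" "B \<in> carrier_mat n m"
  and "\<And>j. j < m \<Longrightarrow> col A j = col B j"
  shows "A = B"
proof (rule eq_matI)
  fix i j assume "i < dim_row B" "j < dim_col B"
  hence i: "i < n" and j: "j < m" using assms by auto
  have "col A j $ i = A $$ (i,j)" using assms(1) i j by (intro index_col) auto
  moreover have "col B j $ i = B $$ (i,j)" using assms(2) i j by (intro index_col) auto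
  ultimately show "A $$ (i,j) = B $$ (i,j)" using assms(3)[OF j] by simp
qed (insert assms, auto)

lemma col_eq_mat: assumes A: "(A::complex mat) \<in> carrier_mat n n" and B: "B \<in> carrier_mat n n"
  and U: "U \<in> carrier_mat n n" and UU: "mat_adjoint U * U = 1\<^sub>m n"
  and E: "\<And>j. j < n \<Longrightarrow> A *\<^sub>v col U j = B *\<^sub>v col U j"
  shows "A = B"
proof -
  have UU': "U * mat_adjoint U = 1\<^sub>m n" by (rule unitary_right[OF U UU])
  have aU: "mat_adjoint U \<in> carrier_mat n n" using U by simp
  have AU: "A * U = B * U"
  proof (rule mat_col_eqI[of _ n n])
    fix j assume j: "j < n"
    show "col (A * U) j = col (B * U) j" using col_mult2[OF A U j] col_mult2[OF B U j] E[OF j] by simp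
  qed (insert A B U, auto)
  have "A = A * (U * mat_adjoint U)" unfolding UU' using A by simp
  also have "\<dots> = (A * U) * mat_adjoint U" by (rule assoc_mult_mat[symmetric, OF A U aU])
  also have "\<dots> = (B * U) * mat_adjoint U" unfolding AU ..
  also have "\<dots> = B * (U * mat_adjoint U)" by (rule assoc_mult_mat[OF B U aU])
  also have "\<dots> = B" unfolding UU' using B by simp
  finally show ?thesis .
qed

lemma unit_col: assumes U: "(U::complex mat) \<in> carrier_mat n n" and UU: "mat_adjoint U * U = 1\<^sub>m n" and j: "j < n"
  shows "mat_adjoint U *\<^sub>v col U j = unit_vec n j" "col U j \<bullet>c col U j = 1"
proof -
  have aU: "mat_adjoint U \<in> carrier_mat n n" using U by simp
  show "mat_adjoint U *\<^sub>v col U j = unit_vec n j"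
    using col_mult2[OF aU U j] unfolding UU using j by simp
  have "col U j \<bullet>c col U j = (mat_adjoint U * U) $$ (j,j)" using adjW_entry[OF U j j] by simp
  thus "col U j \<bullet>c col U j = 1" unfolding UU using j by simp
qed

lemma vec_minus_zero: assumes "(a::complex vec) \<in> carrier_vec n" "b \<in> carrier_vec n" "a - b = 0\<^sub>v n"
  shows "a = b"
proof (rule eq_vecI)
  fix i assume "i < dim_vec b"
  hence i: "i < n" using assms by simp
  have "(a - b) $ i = 0" using assms(3) i by simp
  moreover have "(a - b) $ i = a $ i - b $ i" using assms(1,2) i by (intro index_minus_vec) auto
  ultimately show "a $ i = b $ i" by simp
qed (insert assms, auto)

lemma mv_unit: assumes A: "(A::complex mat) \<in> carrier_mat m n" and j: "j < n"
  shows "A *\<^sub>v unit_vec n j = col A j"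
  using col_mult2[OF A one_carrier_mat[of n] j] j A by simp

lemma zero_smult_vec': "(v::complex vec) \<in> carrier_vec n \<Longrightarrow> (0::complex) \<cdot>\<^sub>v v = 0\<^sub>v n"
  by (intro eq_vecI) auto

lemma sqrt_eigen: assumes pT: "psd_mat T" and T: "T \<in> carrier_mat n n" and u: "u \<in> carrier_vec n"
  and e: "(T * T) *\<^sub>v u = complex_of_real dd \<cdot>\<^sub>v u" and dd: "dd \<ge> 0"
  shows "T *\<^sub>v u = complex_of_real (sqrt dd) \<cdot>\<^sub>v u"
proof -
  define s where "s = sqrt dd"
  have ss: "complex_of_real s * complex_of_real s = complex_of_real dd"
    unfolding s_def of_real_mult[symmetric] using dd by simp
  have hT: "hermitian_mat T" using pT unfolding psd_mat_def by simp
  have Tu: "T *\<^sub>v u \<in> carrier_vec n" using T u by simp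
  define w where "w = T *\<^sub>v u - complex_of_real s \<cdot>\<^sub>v u"
  have w: "w \<in> carrier_vec n" unfolding w_def using Tu u by simp
  have Tw: "T *\<^sub>v w = (T * T) *\<^sub>v u - complex_of_real s \<cdot>\<^sub>v (T *\<^sub>v u)"
    unfolding w_def using T u Tu by (simp add: mult_minus_distrib_mat_vec[OF T] mult_mat_vec[OF T])
  have TTu: "(T * T) *\<^sub>v u \<in> carrier_vec n" using T u by simp
  have Z: "T *\<^sub>v w + complex_of_real s \<cdot>\<^sub>v w = 0\<^sub>v n"
  proof (rule eq_vecI)
    fix i assume "i < dim_vec (0\<^sub>v n :: complex vec)"
    hence i: "i < n" by simp
    have "(T *\<^sub>v w + complex_of_real s \<cdot>\<^sub>v w) $ i
       = ((T * T) *\<^sub>v u) $ i - complex_of_real s * (T *\<^sub>v u) $ i + complex_of_real s * ((T *\<^sub>v u) $ i - complex_of_real s * u $ i)"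
      unfolding Tw unfolding w_def using i carrier_vecD[OF TTu] carrier_vecD[OF Tu] carrier_vecD[OF u] by simp
    also have "((T * T) *\<^sub>v u) $ i = complex_of_real dd * u $ i" unfolding e using i u by simp
    finally have "(T *\<^sub>v w + complex_of_real s \<cdot>\<^sub>v w) $ i = complex_of_real dd * u $ i - (complex_of_real s * complex_of_real s) * u $ i"
      by (simp add: algebra_simps)
    thus "(T *\<^sub>v w + complex_of_real s \<cdot>\<^sub>v w) $ i = 0\<^sub>v n $ i" unfolding ss using i by simp
  qed (insert T w, auto)
  show ?thesis
  proof (cases "s = 0")
    case True
    hence "dd = 0" unfolding s_def using dd by simp
    hence "(T * T) *\<^sub>v u = 0\<^sub>v n" unfolding e using zero_smult_vec'[OF u] by simp
    hence "T *\<^sub>v u = 0\<^sub>v n" by (rule ker_sq[OF hT T u])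
    thus ?thesis using True zero_smult_vec'[OF u] unfolding s_def by simp
  next
    case False
    hence s0: "s > 0" unfolding s_def using dd by simp
    have "(T *\<^sub>v w + complex_of_real s \<cdot>\<^sub>v w) \<bullet>c w = 0" unfolding Z using w by simp
    hence "(T *\<^sub>v w) \<bullet>c w + complex_of_real s * (w \<bullet>c w) = 0"
      using ip_add_left[of "T *\<^sub>v w" n "complex_of_real s \<cdot>\<^sub>v w" w] T w by simp
    hence "Re ((T *\<^sub>v w) \<bullet>c w + complex_of_real s * (w \<bullet>c w)) = Re 0" by (simp only:)
    hence "Re ((T *\<^sub>v w) \<bullet>c w) + s * Re (w \<bullet>c w) = 0"
      by simp
    moreover have "Re ((T *\<^sub>v w) \<bullet>c w) \<ge> 0" using pT T w unfolding psd_mat_def by auto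
    moreover have "Re (w \<bullet>c w) \<ge> 0" by (rule inner_self_real(2))
    moreover have "s * Re (w \<bullet>c w) \<ge> 0" using s0 \<open>Re (w \<bullet>c w) \<ge> 0\<close> by simp
    ultimately have "s * Re (w \<bullet>c w) = 0" by linarith
    hence "Re (w \<bullet>c w) = 0" using s0 by simp
    hence "w = 0\<^sub>v n" using inner_self_zero[OF w] by simp
    hence "T *\<^sub>v u = complex_of_real s \<cdot>\<^sub>v u" unfolding w_def using vec_minus_zero[OF Tu _] u by simp
    thus ?thesis unfolding s_def .
  qed
qed



lemma diag_mv: assumes y: "(y::complex vec) \<in> carrier_vec n"
  shows "mat n n (\<lambda>(i,j). if i = j then f i else 0) *\<^sub>v y = vec n (\<lambda>i. f i * y $ i)"
proof (rule eq_vecI)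
  fix i assume "i < dim_vec (vec n (\<lambda>i. f i * y $ i))"
  hence i: "i < n" by simp
  have "(mat n n (\<lambda>(i,j). if i = j then f i else 0) *\<^sub>v y) $ i = (\<Sum>l\<in>{0..<n}. mat n n (\<lambda>(i,j). if i = j then f i else 0) $$ (i,l) * y $ l)"
    by (rule mv_entry[OF mat_carrier y i])
  also have "\<dots> = (\<Sum>l\<in>{0..<n}. (if i = l then f i else 0) * y $ l)" using i by (intro sum.cong) auto
  also have "\<dots> = (\<Sum>l\<in>{0..<n}. if i = l then f i * y $ l else 0)" by (intro sum.cong) auto
  also have "\<dots> = f i * y $ i" using i by simp
  finally show "(mat n n (\<lambda>(i,j). if i = j then f i else 0) *\<^sub>v y) $ i = vec n (\<lambda>i. f i * y $ i) $ i"
    using i by simp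
qed simp

lemma sqrt_exists_unique: assumes pX: "psd_mat X" and X: "X \<in> carrier_mat n n"
  shows "\<exists>!S. psd_mat S \<and> S * S = X"
proof -
  have hX: "hermitian_mat X" using pX unfolding psd_mat_def by simp
  obtain U d where U: "U \<in> carrier_mat n n" and UU: "mat_adjoint U * U = 1\<^sub>m n"
    and E: "\<And>j. j < n \<Longrightarrow> X *\<^sub>v col U j = complex_of_real (d j) \<cdot>\<^sub>v col U j"
    using spectral[OF hX X] by auto
  have aU: "mat_adjoint U \<in> carrier_mat n n" using U by simp
  have cU: "col U j \<in> carrier_vec n" for j using U by (intro carrier_vecI) simp
  have dnn: "d j \<ge> 0" if j: "j < n" for j
  proof -
    have "(X *\<^sub>v col U j) \<bullet>c col U j = complex_of_real (d j)"
      unfolding E[OF j] using unit_col(2)[OF U UU j] cU[of j] by simp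
    moreover have "Re ((X *\<^sub>v col U j) \<bullet>c col U j) \<ge> 0" using pX X cU[of j] unfolding psd_mat_def by auto
    ultimately show ?thesis by simp
  qed
  define s where "s = (\<lambda>j. sqrt (d j))"
  define D where "D = mat n n (\<lambda>(i,j). if i = j then complex_of_real (s i) else 0)"
  have D: "D \<in> carrier_mat n n" unfolding D_def by simp
  define S0 where "S0 = U * D * mat_adjoint U"
  have UD: "U * D \<in> carrier_mat n n" using U D by simp
  have S0: "S0 \<in> carrier_mat n n" unfolding S0_def using mult_carrier_mat[OF UD aU] .
  have colD: "col D j = complex_of_real (s j) \<cdot>\<^sub>v unit_vec n j" if "j < n" for j
    unfolding D_def using that by (intro eq_vecI) auto
  have S0col: "S0 *\<^sub>v col U j = complex_of_real (s j) \<cdot>\<^sub>v col U j" if j: "j < n" for j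
  proof -
    have "S0 *\<^sub>v col U j = (U * D) *\<^sub>v (mat_adjoint U *\<^sub>v col U j)"
      unfolding S0_def by (rule assoc_mult_mat_vec[OF UD aU cU])
    also have "mat_adjoint U *\<^sub>v col U j = unit_vec n j" by (rule unit_col(1)[OF U UU j])
    also have "(U * D) *\<^sub>v unit_vec n j = U *\<^sub>v (D *\<^sub>v unit_vec n j)"
      by (rule assoc_mult_mat_vec[OF U D unit_vec_carrier])
    also have "D *\<^sub>v unit_vec n j = complex_of_real (s j) \<cdot>\<^sub>v unit_vec n j"
      unfolding mv_unit[OF D j] colD[OF j] ..
    also have "U *\<^sub>v (complex_of_real (s j) \<cdot>\<^sub>v unit_vec n j) = complex_of_real (s j) \<cdot>\<^sub>v col U j"
      unfolding mult_mat_vec[OF U unit_vec_carrier] mv_unit[OF U j] ..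
    finally show ?thesis .
  qed
  have hD: "mat_adjoint D = D" unfolding D_def by (intro eq_matI) auto
  have hS0: "hermitian_mat S0"
  proof -
    have "mat_adjoint S0 = mat_adjoint (mat_adjoint U) * mat_adjoint (U * D)"
      unfolding S0_def by (rule adj_mult[OF UD aU])
    also have "\<dots> = U * (D * mat_adjoint U)" unfolding adj_mult[OF U D] hD by simp
    also have "\<dots> = S0" unfolding S0_def by (rule assoc_mult_mat[symmetric, OF U D aU])
    finally show ?thesis unfolding hermitian_mat_def using S0 by simp
  qed
  have pS0: "psd_mat S0" unfolding psd_mat_def
  proof (intro conjI hS0 ballI)
    fix v :: "complex vec" assume "v \<in> carrier_vec (dim_row S0)"
    hence v: "v \<in> carrier_vec n" using S0 by simp
    define y where "y = mat_adjoint U *\<^sub>v v"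
    have y: "y \<in> carrier_vec n" unfolding y_def using aU v by simp
    have Dy: "D *\<^sub>v y \<in> carrier_vec n" using D y by simp
    have "S0 *\<^sub>v v = U *\<^sub>v (D *\<^sub>v y)" unfolding S0_def y_def
      using assoc_mult_mat_vec[OF UD aU v] assoc_mult_mat_vec[OF U D, of "mat_adjoint U *\<^sub>v v"] aU v by simp
    hence "(S0 *\<^sub>v v) \<bullet>c v = (D *\<^sub>v y) \<bullet>c y" using adj_inner[OF U Dy v] by (simp add: y_def[symmetric])
    also have "\<dots> = (\<Sum>i\<in>{0..<n}. complex_of_real (s i) * (y $ i * cnj (y $ i)))"
      unfolding D_def diag_mv[OF y] using y by (simp add: scalar_prod_def mult.assoc)
    finally have eq: "Re ((S0 *\<^sub>v v) \<bullet>c v) = (\<Sum>i\<in>{0..<n}. s i * Re (y $ i * cnj (y $ i)))"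
      by (simp add: Re_sum)
    have "s i * Re (y $ i * cnj (y $ i)) \<ge> 0" if "i \<in> {0..<n}" for i unfolding s_def
      using dnn[of i] that by (intro mult_nonneg_nonneg) (auto simp: complex_mult_cnj)
    thus "0 \<le> Re ((S0 *\<^sub>v v) \<bullet>c v)" unfolding eq by (intro sum_nonneg) auto
  qed
  have S0sq: "S0 * S0 = X"
  proof (rule col_eq_mat[OF _ X U UU])
    show "S0 * S0 \<in> carrier_mat n n" using S0 by simp
    fix j assume j: "j < n"
    have "(S0 * S0) *\<^sub>v col U j = S0 *\<^sub>v (complex_of_real (s j) \<cdot>\<^sub>v col U j)"
      using assoc_mult_mat_vec[OF S0 S0 cU] S0col[OF j] by simp
    also have "\<dots> = (complex_of_real (s j) * complex_of_real (s j)) \<cdot>\<^sub>v col U j"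
      unfolding mult_mat_vec[OF S0 cU] S0col[OF j] smult_smult_assoc ..
    also have "complex_of_real (s j) * complex_of_real (s j) = complex_of_real (d j)"
      unfolding s_def of_real_mult[symmetric] using dnn[OF j] by simp
    finally show "(S0 * S0) *\<^sub>v col U j = X *\<^sub>v col U j" using E[OF j] by simp
  qed
  have uniq: "T = S0" if pT: "psd_mat T" and TT: "T * T = X" for T
  proof -
    have "T \<in> carrier_mat (dim_row T) (dim_row T)" by (rule psd_carrier[OF pT])
    moreover have "dim_row T = n" using arg_cong[OF TT, of dim_row] X by simp
    ultimately have T: "T \<in> carrier_mat n n" by simp
    show ?thesis
    proof (rule col_eq_mat[OF T S0 U UU])
      fix j assume j: "j < n"
      have "T *\<^sub>v col U j = complex_of_real (sqrt (d j)) \<cdot>\<^sub>v col U j"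
        using sqrt_eigen[OF pT T cU _ dnn[OF j]] E[OF j] TT by simp
      thus "T *\<^sub>v col U j = S0 *\<^sub>v col U j" unfolding S0col[OF j] s_def .
    qed
  qed
  show ?thesis using pS0 S0sq uniq by blast
qed

lemma sqrt_props: assumes pX: "psd_mat X" and X: "X \<in> carrier_mat n n"
  shows "psd_mat (sqrt_mat X)" "sqrt_mat X * sqrt_mat X = X" "sqrt_mat X \<in> carrier_mat n n"
proof -
  have "psd_mat (sqrt_mat X) \<and> sqrt_mat X * sqrt_mat X = X"
    unfolding sqrt_mat_def by (rule theI'[OF sqrt_exists_unique[OF pX X]])
  thus p: "psd_mat (sqrt_mat X)" and sq: "sqrt_mat X * sqrt_mat X = X" by auto
  have "sqrt_mat X \<in> carrier_mat (dim_row (sqrt_mat X)) (dim_row (sqrt_mat X))" by (rule psd_carrier[OF p])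
  moreover have "dim_row (sqrt_mat X) = n" using arg_cong[OF sq, of dim_row] X by simp
  ultimately show "sqrt_mat X \<in> carrier_mat n n" by simp
qed



lemma psd_BB: assumes B: "(B::complex mat) \<in> carrier_mat p q"
  shows "psd_mat (B * mat_adjoint B)"
proof -
  have aB: "mat_adjoint B \<in> carrier_mat q p" using B by simp
  have BB: "B * mat_adjoint B \<in> carrier_mat p p" using mult_carrier_mat[OF B aB] .
  have "mat_adjoint (B * mat_adjoint B) = B * mat_adjoint B"
    using adj_mult[OF B aB] by simp
  hence h: "hermitian_mat (B * mat_adjoint B)" unfolding hermitian_mat_def using BB by simp
  show ?thesis unfolding psd_mat_def
  proof (intro conjI h ballI)
    fix v :: "complex vec" assume "v \<in> carrier_vec (dim_row (B * mat_adjoint B))"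
    hence v: "v \<in> carrier_vec p" using B by simp
    have Bv: "mat_adjoint B *\<^sub>v v \<in> carrier_vec q" using adj_mv_carrier[OF B] .
    have "((B * mat_adjoint B) *\<^sub>v v) \<bullet>c v = (B *\<^sub>v (mat_adjoint B *\<^sub>v v)) \<bullet>c v"
      using assoc_mult_mat_vec[OF B aB v] by simp
    also have "\<dots> = (mat_adjoint B *\<^sub>v v) \<bullet>c (mat_adjoint B *\<^sub>v v)" using adj_inner[OF B Bv v] by simp
    finally show "0 \<le> Re (((B * mat_adjoint B) *\<^sub>v v) \<bullet>c v)" using inner_self_real(2) by simp
  qed
qed

theorem corollary2p2:
  fixes A B C :: "complex mat" and p q :: nat
  assumes "A \<in> carrier_mat p p" and "B \<in> carrier_mat p q" and "C \<in> carrier_mat q q"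
    and "psd_mat A" and "psd_mat C"
  shows "invertible_mat (four_block_mat A B (mat_adjoint B) (- C)) \<longleftrightarrow>
         pd_mat (A + sqrt_mat (B * mat_adjoint B)) \<and> pd_mat (C + sqrt_mat (mat_adjoint B * B))"
proof -
  note A = assms(1) and B = assms(2) and C = assms(3) and pA = assms(4) and pC = assms(5)
  have aB: "mat_adjoint B \<in> carrier_mat q p" using B by simp
  have mC: "- C \<in> carrier_mat q q" using C by simp
  have H: "four_block_mat A B (mat_adjoint B) (- C) \<in> carrier_mat (p+q) (p+q)"
    by (rule four_block_carrier_mat[OF A mC])
  define S1 where "S1 = sqrt_mat (B * mat_adjoint B)"
  define S2 where "S2 = sqrt_mat (mat_adjoint B * B)"
  have X1: "B * mat_adjoint B \<in> carrier_mat p p" using mult_carrier_mat[OF B aB] .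
  have X2: "mat_adjoint B * B \<in> carrier_mat q q" using mult_carrier_mat[OF aB B] .
  have pX1: "psd_mat (B * mat_adjoint B)" by (rule psd_BB[OF B])
  have pX2: "psd_mat (mat_adjoint B * B)" using psd_BB[OF aB] by simp
  note s1 = sqrt_props[OF pX1 X1, folded S1_def]
  note s2 = sqrt_props[OF pX2 X2, folded S2_def]
  have h1: "hermitian_mat S1" using s1(1) unfolding psd_mat_def by simp
  have h2: "hermitian_mat S2" using s2(1) unfolding psd_mat_def by simp
  have k1: "S1 *\<^sub>v v = 0\<^sub>v p \<longleftrightarrow> mat_adjoint B *\<^sub>v v = 0\<^sub>v q" if v: "v \<in> carrier_vec p" for v
  proof
    assume z: "S1 *\<^sub>v v = 0\<^sub>v p"
    have "(B * mat_adjoint B) *\<^sub>v v = S1 *\<^sub>v (S1 *\<^sub>v v)"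
      unfolding s1(2)[symmetric] using assoc_mult_mat_vec[OF s1(3) s1(3) v] .
    also have "\<dots> = 0\<^sub>v p" unfolding z by (rule mat_vec_zero[OF s1(3)])
    finally show "mat_adjoint B *\<^sub>v v = 0\<^sub>v q" using ker_BB[OF B v] by simp
  next
    assume "mat_adjoint B *\<^sub>v v = 0\<^sub>v q"
    hence "(S1 * S1) *\<^sub>v v = 0\<^sub>v p" unfolding s1(2) using ker_BB[OF B v] by simp
    thus "S1 *\<^sub>v v = 0\<^sub>v p" by (rule ker_sq[OF h1 s1(3) v])
  qed
  have k2: "S2 *\<^sub>v v = 0\<^sub>v q \<longleftrightarrow> B *\<^sub>v v = 0\<^sub>v p" if v: "v \<in> carrier_vec q" for v
  proof -
    have kb: "(mat_adjoint B * B) *\<^sub>v v = 0\<^sub>v q \<longleftrightarrow> B *\<^sub>v v = 0\<^sub>v p"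
      using ker_BB[OF aB v] by simp
    show ?thesis
    proof
      assume z: "S2 *\<^sub>v v = 0\<^sub>v q"
      have "(mat_adjoint B * B) *\<^sub>v v = S2 *\<^sub>v (S2 *\<^sub>v v)"
        unfolding s2(2)[symmetric] using assoc_mult_mat_vec[OF s2(3) s2(3) v] .
      also have "\<dots> = 0\<^sub>v q" unfolding z by (rule mat_vec_zero[OF s2(3)])
      finally show "B *\<^sub>v v = 0\<^sub>v p" using kb by simp
    next
      assume "B *\<^sub>v v = 0\<^sub>v p"
      hence "(S2 * S2) *\<^sub>v v = 0\<^sub>v q" unfolding s2(2) using kb by simp
      thus "S2 *\<^sub>v v = 0\<^sub>v q" by (rule ker_sq[OF h2 s2(3) v])
    qed
  qed
  have "invertible_mat (four_block_mat A B (mat_adjoint B) (- C)) \<longleftrightarrow>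
     (\<forall>x\<in>carrier_vec p. A *\<^sub>v x = 0\<^sub>v p \<and> mat_adjoint B *\<^sub>v x = 0\<^sub>v q \<longrightarrow> x = 0\<^sub>v p)
      \<and> (\<forall>y\<in>carrier_vec q. C *\<^sub>v y = 0\<^sub>v q \<and> B *\<^sub>v y = 0\<^sub>v p \<longrightarrow> y = 0\<^sub>v q)"
    unfolding inv_iff_ker[OF H] by (rule H_ker[OF A B C pA pC])
  also have "\<dots> \<longleftrightarrow> pd_mat (A + S1) \<and> pd_mat (C + S2)"
    unfolding pd_sum_iff[OF pA s1(1) A s1(3)] pd_sum_iff[OF pC s2(1) C s2(3)]
    using k1 k2 by auto
  finally show ?thesis unfolding S1_def S2_def .
qed

end
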